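(* Let $\mathcal{S}\subset\mathbb{R}_{\ge0}$ be measurable with positive Lebesgue measure, let $G_1,\dots,G_K$ be probability distributions on $\mathbb{R}$, and let $\mathcal{G}=\mathrm{ConvexHull}(G_1,\dots,G_K)=\{\sum_{j=1}^K\pi_jG_j:\pi_j\ge0,\sum_j\pi_j=1\}$. Then $$\mathrm{Tilt}[\mathcal{G}]=\mathrm{ConvexHull}(\mathrm{Tilt}[G_1],\dots,\mathrm{Tilt}[G_K]).$$
   Context: $\varphi(z;\mu)$ is the $\mathrm{N}(\mu,1)$ density, $\varphi^{\mathrm{fold}}(z;\mu)=\varphi(z;\mu)+\varphi(-z;\mu)$, $\Phi(\mathcal{S};\mu)=\int_{\mathcal{S}}\varphi^{\mathrm{fold}}(z;\mu)dz$, $\mathrm{Tilt}[G](d\mu)=\frac{\Phi(\mathcal{S};\mu)G(d\mu)}{\int\Phi(\mathcal{S};\mu')G(d\mu')}$, and $\mathrm{Tilt}[\mathcal{G}]=\{\mathrm{Tilt}[G]:G\in\mathcal{G}\}$. *)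

theory Defs
  imports "HOL-Probability.Probability"
begin

definition phi_fold :: "real \<Rightarrow> real \<Rightarrow> real" where
  "phi_fold z \<mu> = normal_density \<mu> 1 z + normal_density \<mu> 1 (- z)"

definition Phi_sel :: "real set \<Rightarrow> real \<Rightarrow> real" where
  "Phi_sel S \<mu> = (LINT z:S|lebesgue. phi_fold z \<mu>)"

definition Tilt :: "real set \<Rightarrow> real measure \<Rightarrow> real measure" where
  "Tilt S G = density G (\<lambda>\<mu>. ennreal (Phi_sel S \<mu> / (\<integral>\<mu>'. Phi_sel S \<mu>' \<partial>G)))"

definition ConvHull :: "(nat \<Rightarrow> real measure) \<Rightarrow> nat \<Rightarrow> real measure set" where
  "ConvHull G K = {N. sets N = sets borel \<and>
     (\<exists>\<pi>::nat \<Rightarrow> real. (\<forall>j<K. \<pi> j \<ge> 0) \<and> (\<Sum>j<K. \<pi> j) = 1 \<and>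
        (\<forall>A\<in>sets borel. emeasure N A = (\<Sum>j<K. ennreal (\<pi> j) * emeasure (G j) A)))}"

end

theory Submission
  imports Defs
begin

lemma phi_fold_alt: "phi_fold z m = normal_density m 1 z + normal_density (-m) 1 z"
  unfolding phi_fold_def normal_density_def by (simp add: power2_eq_square algebra_simps)

lemma phi_fold_pos: "phi_fold z m > 0"
  unfolding phi_fold_def by (intro add_pos_pos normal_density_pos) auto

lemma phi_fold_meas[measurable]: "(\<lambda>p. phi_fold (fst p) (snd p)) \<in> borel_measurable (borel \<Otimes>\<^sub>M borel)"
  unfolding phi_fold_def normal_density_def by measurable

lemma integrable_phi_fold: "integrable lebesgue (\<lambda>z. phi_fold z m)"
proof -
  have "integrable lborel (\<lambda>z. phi_fold z m)"
    unfolding phi_fold_alt by (intro Bochner_Integration.integrable_add) auto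
  then show ?thesis
    by (subst integrable_completion) (auto simp: phi_fold_def)
qed

lemma integral_phi_fold: "(\<integral>z. phi_fold z m \<partial>lebesgue) = 2"
proof -
  have "(\<integral>z. phi_fold z m \<partial>lebesgue) = (\<integral>z. phi_fold z m \<partial>lborel)"
    by (rule integral_completion) (auto simp: phi_fold_def)
  also have "\<dots> = 2" unfolding phi_fold_alt
    by (subst Bochner_Integration.integral_add) auto
  finally show ?thesis .
qed

lemma sigma_finite_lebesgue: "sigma_finite_measure (lebesgue :: 'a::euclidean_space measure)"
proof
  obtain A :: "'a set set" where "countable A" "A \<subseteq> sets lborel" "\<Union>A = space lborel" "\<forall>a\<in>A. emeasure lborel a \<noteq> \<infinity>"
    using lborel.sigma_finite_countable by blast
  then show "\<exists>A. countable A \<and> A \<subseteq> sets (lebesgue :: 'a measure) \<and> \<Union> A = space (lebesgue :: 'a measure) \<and> (\<forall>a\<in>A. emeasure lebesgue a \<noteq> \<infinity>)"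
    by (intro exI[of _ A]) (auto simp: emeasure_completion)
qed

context
  fixes S :: "real set"
  assumes S: "S \<in> sets lebesgue" "emeasure lebesgue S > 0"
begin

lemma integrable_Phi: "integrable lebesgue (\<lambda>z. indicator S z *\<^sub>R phi_fold z m)"
  using S integrable_phi_fold by (intro integrable_mult_indicator) auto

lemma Phi_le: "Phi_sel S m \<le> 2"
proof -
  have "Phi_sel S m \<le> (\<integral>z. phi_fold z m \<partial>lebesgue)"
    unfolding Phi_sel_def set_lebesgue_integral_def
    using integrable_Phi integrable_phi_fold phi_fold_pos
    by (intro integral_mono) (auto simp: indicator_def less_imp_le)
  then show ?thesis using integral_phi_fold by simp
qed

lemma Phi_pos: "Phi_sel S m > 0"
proof -
  have nn: "0 \<le> Phi_sel S m" unfolding Phi_sel_def set_lebesgue_integral_def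
    using phi_fold_pos by (intro Bochner_Integration.integral_nonneg) (auto simp: indicator_def less_imp_le)
  have "Phi_sel S m \<noteq> 0"
  proof
    assume "Phi_sel S m = 0"
    then have "AE z in lebesgue. indicator S z *\<^sub>R phi_fold z m = 0"
      unfolding Phi_sel_def set_lebesgue_integral_def
      using integrable_Phi phi_fold_pos
      by (subst (asm) integral_nonneg_eq_0_iff_AE) (auto simp: indicator_def less_imp_le)
    then have "AE z in lebesgue. z \<notin> S"
    proof (rule AE_mp)
      show "\<forall>\<^sub>F z in ae_filter lebesgue. indicator S z *\<^sub>R phi_fold z m = 0 \<longrightarrow> z \<notin> S"
        by (intro AE_I2) (metis indicator_simps(1) less_irrefl phi_fold_pos scaleR_one)
    qed
    then have "emeasure lebesgue S = 0"
      using S by (subst (asm) AE_iff_measurable[of S]) auto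
    with S show False by simp
  qed
  with nn show ?thesis by simp
qed

lemma Phi_meas[measurable]: "Phi_sel S \<in> borel_measurable borel"
proof -
  interpret sigma_finite_measure "lebesgue :: real measure" by (rule sigma_finite_lebesgue)
  have "(\<lambda>p::real\<times>real. indicator S (snd p) *\<^sub>R phi_fold (snd p) (fst p)) \<in> borel_measurable (borel \<Otimes>\<^sub>M lebesgue)"
  proof -
    have id: "(\<lambda>p::real\<times>real. (snd p, fst p)) \<in> (borel \<Otimes>\<^sub>M lebesgue) \<rightarrow>\<^sub>M (borel \<Otimes>\<^sub>M borel)"
      by (intro measurable_Pair measurable_compose[OF measurable_snd] measurable_fst)
         (auto intro: measurable_completion)
    have "(\<lambda>p. phi_fold (fst p) (snd p)) \<circ> (\<lambda>p::real\<times>real. (snd p, fst p)) \<in> borel_measurable (borel \<Otimes>\<^sub>M lebesgue)"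
      using measurable_comp[OF id phi_fold_meas] .
    moreover have "(\<lambda>p::real\<times>real. indicator S (snd p) :: real) \<in> borel_measurable (borel \<Otimes>\<^sub>M lebesgue)"
      using S by (intro measurable_compose[OF measurable_snd]) auto
    ultimately show ?thesis by (simp add: o_def)
  qed
  then show ?thesis unfolding Phi_sel_def set_lebesgue_integral_def
    by (intro borel_measurable_lebesgue_integral[where f="\<lambda>m z. indicator S z *\<^sub>R phi_fold z m"]) auto
qed

end

lemma mix_nn:
  fixes N :: "real measure" and G :: "nat \<Rightarrow> real measure"
  assumes sN: "sets N = sets borel" and sG: "\<And>j. j < K \<Longrightarrow> sets (G j) = sets borel"
    and eq: "\<And>A. A \<in> sets borel \<Longrightarrow> emeasure N A = (\<Sum>j<K. ennreal (\<pi> j) * emeasure (G j) A)"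
    and f: "f \<in> borel_measurable borel"
  shows "(\<integral>\<^sup>+x. f x \<partial>N) = (\<Sum>j<K. ennreal (\<pi> j) * (\<integral>\<^sup>+x. f x \<partial>G j))"
  using f
proof (induction rule: borel_measurable_induct)
  case (cong f g)
  then have "f = g" by auto
  with cong show ?case by simp
next
  case (set A)
  then show ?case using sN sG eq by (simp add: nn_integral_indicator)
next
  case (mult u c)
  have mN: "u \<in> borel_measurable N" using mult(2) by (simp add: measurable_cong_sets[OF sN refl])
  have mG: "u \<in> borel_measurable (G j)" if "j < K" for j
    using mult(2) by (simp add: measurable_cong_sets[OF sG[OF that] refl])
  have "(\<integral>\<^sup>+x. c * u x \<partial>N) = c * (\<integral>\<^sup>+x. u x \<partial>N)" using mN by (rule nn_integral_cmult)
  also have "\<dots> = (\<Sum>j<K. ennreal (\<pi> j) * (c * (\<integral>\<^sup>+x. u x \<partial>G j)))"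
    using mult(4) by (simp add: sum_distrib_left mult.left_commute)
  also have "\<dots> = (\<Sum>j<K. ennreal (\<pi> j) * (\<integral>\<^sup>+x. c * u x \<partial>G j))"
    using mG by (intro sum.cong refl) (simp add: nn_integral_cmult)
  finally show ?case .
next
  case (add u v)
  have mN: "u \<in> borel_measurable N" "v \<in> borel_measurable N"
    using add by (auto simp add: measurable_cong_sets[OF sN refl])
  have mG: "u \<in> borel_measurable (G j)" "v \<in> borel_measurable (G j)" if "j < K" for j
    using add by (auto simp add: measurable_cong_sets[OF sG[OF that] refl])
  have "(\<integral>\<^sup>+x. v x + u x \<partial>N) = (\<integral>\<^sup>+x. v x \<partial>N) + (\<integral>\<^sup>+x. u x \<partial>N)"
    using mN by (intro nn_integral_add) auto
  also have "\<dots> = (\<Sum>j<K. ennreal (\<pi> j) * ((\<integral>\<^sup>+x. v x \<partial>G j) + (\<integral>\<^sup>+x. u x \<partial>G j)))"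
    using add by (simp add: sum.distrib distrib_left)
  also have "\<dots> = (\<Sum>j<K. ennreal (\<pi> j) * (\<integral>\<^sup>+x. v x + u x \<partial>G j))"
    using mG by (intro sum.cong refl) (simp add: nn_integral_add)
  finally show ?case .
next
  case (seq U)
  have mN: "U i \<in> borel_measurable N" for i
    using seq by (auto simp add: measurable_cong_sets[OF sN refl])
  have mG: "U i \<in> borel_measurable (G j)" if "j < K" for j i
    using seq by (auto simp add: measurable_cong_sets[OF sG[OF that] refl])
  have "(\<integral>\<^sup>+x. (SUP i. U i) x \<partial>N) = (\<integral>\<^sup>+x. (SUP i. U i x) \<partial>N)" by (simp add: SUP_apply image_comp)
  also have "\<dots> = (SUP i. \<integral>\<^sup>+x. U i x \<partial>N)"
    using mN \<open>incseq U\<close> by (intro nn_integral_monotone_convergence_SUP) auto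
  also have "\<dots> = (SUP i. \<Sum>j<K. ennreal (\<pi> j) * (\<integral>\<^sup>+x. U i x \<partial>G j))"
    using seq.IH by simp
  also have "\<dots> = (\<Sum>j<K. SUP i. ennreal (\<pi> j) * (\<integral>\<^sup>+x. U i x \<partial>G j))"
  proof (rule ennreal_SUP_sum)
    fix j assume "j \<in> {..<K}"
    show "incseq (\<lambda>i. ennreal (\<pi> j) * (\<integral>\<^sup>+x. U i x \<partial>G j))"
      using \<open>incseq U\<close> unfolding incseq_def
      by (auto intro!: mult_left_mono nn_integral_mono simp: le_fun_def)
  qed
  also have "\<dots> = (\<Sum>j<K. ennreal (\<pi> j) * (SUP i. \<integral>\<^sup>+x. U i x \<partial>G j))"
    by (simp add: SUP_mult_left_ennreal)
  also have "\<dots> = (\<Sum>j<K. ennreal (\<pi> j) * (\<integral>\<^sup>+x. (SUP i. U i) x \<partial>G j))"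
  proof (intro sum.cong refl arg_cong2[where f="(*)"])
    fix j assume "j \<in> {..<K}"
    then have "(\<integral>\<^sup>+x. (SUP i. U i x) \<partial>G j) = (SUP i. \<integral>\<^sup>+x. U i x \<partial>G j)"
      using mG \<open>incseq U\<close> by (intro nn_integral_monotone_convergence_SUP) auto
    then show "(SUP i. \<integral>\<^sup>+x. U i x \<partial>G j) = (\<integral>\<^sup>+x. (SUP i. U i) x \<partial>G j)"
      by (simp add: SUP_apply image_comp)
  qed
  finally show ?case .
qed

definition mixm :: "(nat \<Rightarrow> real) \<Rightarrow> (nat \<Rightarrow> real measure) \<Rightarrow> nat \<Rightarrow> real measure" where
  "mixm \<pi> G K = measure_of (space borel) (sets borel) (\<lambda>A. \<Sum>j<K. ennreal (\<pi> j) * emeasure (G j) A)"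

lemma sets_mixm: "sets (mixm \<pi> G K) = sets borel"
  unfolding mixm_def by (rule sets.sets_measure_of_eq)

lemma emeasure_mixm:
  assumes sG: "\<And>j. j < K \<Longrightarrow> sets (G j) = sets borel" and A: "A \<in> sets borel"
  shows "emeasure (mixm \<pi> G K) A = (\<Sum>j<K. ennreal (\<pi> j) * emeasure (G j) A)"
  unfolding mixm_def
proof (rule emeasure_measure_of_sigma)
  show "sigma_algebra (space borel) (sets borel)" by (rule sets.sigma_algebra_axioms)
  show "positive (sets borel) (\<lambda>A. \<Sum>j<K. ennreal (\<pi> j) * emeasure (G j) A)"
    by (simp add: positive_def)
  show "countably_additive (sets borel) (\<lambda>A. \<Sum>j<K. ennreal (\<pi> j) * emeasure (G j) A)"
  proof (rule countably_additiveI)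
    fix F :: "nat \<Rightarrow> real set"
    assume F: "range F \<subseteq> sets borel" "disjoint_family F" "(\<Union>i. F i) \<in> sets borel"
    have "(\<Sum>i. \<Sum>j<K. ennreal (\<pi> j) * emeasure (G j) (F i)) = (\<Sum>j<K. \<Sum>i. ennreal (\<pi> j) * emeasure (G j) (F i))"
      by (rule suminf_sum) (rule summableI)
    also have "\<dots> = (\<Sum>j<K. ennreal (\<pi> j) * emeasure (G j) (\<Union>i. F i))"
    proof (intro sum.cong refl)
      fix j assume "j \<in> {..<K}"
      then have "sets (G j) = sets borel" using sG by auto
      then have "(\<Sum>i. emeasure (G j) (F i)) = emeasure (G j) (\<Union>i. F i)"
        using F by (intro suminf_emeasure) auto
      then show "(\<Sum>i. ennreal (\<pi> j) * emeasure (G j) (F i)) = ennreal (\<pi> j) * emeasure (G j) (\<Union>i. F i)"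
        by simp
    qed
    finally show "(\<Sum>i. \<Sum>j<K. ennreal (\<pi> j) * emeasure (G j) (F i)) = (\<Sum>j<K. ennreal (\<pi> j) * emeasure (G j) (\<Union>i. F i))" .
  qed
qed (use A in auto)


context
  fixes S :: "real set" and G :: "nat \<Rightarrow> real measure" and K :: nat
  assumes S: "S \<in> sets lebesgue" "emeasure lebesgue S > 0"
    and PG: "\<And>j. j < K \<Longrightarrow> prob_space (G j)"
    and sG: "\<And>j. j < K \<Longrightarrow> sets (G j) = sets borel"
begin

lemma PhiM: "Phi_sel S \<in> borel_measurable M" if "sets M = sets borel" for M :: "real measure"
  using Phi_meas[OF S] by (simp add: measurable_cong_sets[OF that refl])

lemma PhiMe: "(\<lambda>m. ennreal (Phi_sel S m)) \<in> borel_measurable borel"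
  using Phi_meas[OF S] by measurable

lemma intG: "integrable (G j) (Phi_sel S)" if "j < K"
proof -
  interpret prob_space "G j" using PG[OF that] .
  show ?thesis using PhiM[OF sG[OF that]] Phi_le[OF S] Phi_pos[OF S]
    by (intro integrable_const_bound[where B=2]) (auto simp: less_imp_le)
qed

lemma cG_pos: "(\<integral>m. Phi_sel S m \<partial>G j) > 0" if "j < K"
proof -
  interpret prob_space "G j" using PG[OF that] .
  have nn: "(\<integral>m. Phi_sel S m \<partial>G j) \<ge> 0"
    using Phi_pos[OF S] by (intro Bochner_Integration.integral_nonneg) (auto simp: less_imp_le)
  have "(\<integral>m. Phi_sel S m \<partial>G j) \<noteq> 0"
  proof
    assume "(\<integral>m. Phi_sel S m \<partial>G j) = 0"
    then have "AE m in G j. Phi_sel S m = 0"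
      using intG[OF that] Phi_pos[OF S] by (subst (asm) integral_nonneg_eq_0_iff_AE) (auto simp: less_imp_le)
    then have "AE m in G j. False" by (rule AE_mp) (rule AE_I2, metis less_irrefl Phi_pos[OF S])
    then show False by simp
  qed
  with nn show ?thesis by simp
qed

lemma nnG: "(\<integral>\<^sup>+m. ennreal (Phi_sel S m) \<partial>G j) = ennreal (\<integral>m. Phi_sel S m \<partial>G j)" if "j < K"
  using intG[OF that] Phi_pos[OF S] by (intro nn_integral_eq_integral) (auto simp: less_imp_le)

lemma mix_c:
  assumes sN: "sets N = sets borel" and pi: "\<And>j. j < K \<Longrightarrow> \<pi> j \<ge> 0"
    and eq: "\<And>A. A \<in> sets borel \<Longrightarrow> emeasure N A = (\<Sum>j<K. ennreal (\<pi> j) * emeasure (G j) A)"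
  shows "(\<integral>m. Phi_sel S m \<partial>N) = (\<Sum>j<K. \<pi> j * (\<integral>m. Phi_sel S m \<partial>G j))"
proof -
  have "(\<integral>m. Phi_sel S m \<partial>N) = enn2real (\<integral>\<^sup>+m. ennreal (Phi_sel S m) \<partial>N)"
    using PhiM[OF sN] Phi_pos[OF S] by (intro integral_eq_nn_integral) (auto simp: less_imp_le)
  also have "(\<integral>\<^sup>+m. ennreal (Phi_sel S m) \<partial>N) = (\<Sum>j<K. ennreal (\<pi> j) * (\<integral>\<^sup>+m. ennreal (Phi_sel S m) \<partial>G j))"
    by (rule mix_nn[OF sN sG eq PhiMe]) auto
  also have "\<dots> = (\<Sum>j<K. ennreal (\<pi> j * (\<integral>m. Phi_sel S m \<partial>G j)))"
    using pi cG_pos by (intro sum.cong refl) (simp add: nnG ennreal_mult less_imp_le)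
  also have "\<dots> = ennreal (\<Sum>j<K. \<pi> j * (\<integral>m. Phi_sel S m \<partial>G j))"
    using pi cG_pos by (intro sum_ennreal) (auto simp: less_imp_le)
  finally show ?thesis
    using pi cG_pos by (subst (asm) enn2real_ennreal) (auto intro!: sum_nonneg mult_nonneg_nonneg simp: less_imp_le)
qed

lemma tilt_mix:
  assumes sN: "sets N = sets borel" and pi: "\<And>j. j < K \<Longrightarrow> \<pi> j \<ge> 0"
    and eq: "\<And>A. A \<in> sets borel \<Longrightarrow> emeasure N A = (\<Sum>j<K. ennreal (\<pi> j) * emeasure (G j) A)"
    and cpos: "(\<integral>m. Phi_sel S m \<partial>N) > 0"
    and A: "A \<in> sets borel"
  shows "emeasure (Tilt S N) A = (\<Sum>j<K. ennreal (\<pi> j * (\<integral>m. Phi_sel S m \<partial>G j) / (\<integral>m. Phi_sel S m \<partial>N)) * emeasure (Tilt S (G j)) A)"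
proof -
  define c where "c = (\<integral>m. Phi_sel S m \<partial>N)"
  define cj where "cj j = (\<integral>m. Phi_sel S m \<partial>G j)" for j
  have f: "(\<lambda>m. ennreal (Phi_sel S m / c) * indicator A m) \<in> borel_measurable borel"
    using Phi_meas[OF S] A by measurable
  have "emeasure (Tilt S N) A = (\<integral>\<^sup>+m. ennreal (Phi_sel S m / c) * indicator A m \<partial>N)"
    unfolding Tilt_def c_def using A sN PhiM[OF sN]
    by (subst emeasure_density) auto
  also have "\<dots> = (\<Sum>j<K. ennreal (\<pi> j) * (\<integral>\<^sup>+m. ennreal (Phi_sel S m / c) * indicator A m \<partial>G j))"
    by (rule mix_nn[OF sN sG eq f]) auto
  also have "\<dots> = (\<Sum>j<K. ennreal (\<pi> j * cj j / c) * emeasure (Tilt S (G j)) A)"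
  proof (intro sum.cong refl)
    fix j assume "j \<in> {..<K}"
    then have j: "j < K" by simp
    have cj: "cj j > 0" using cG_pos[OF j] by (simp add: cj_def)
    have c: "c > 0" using cpos by (simp add: c_def)
    have "emeasure (Tilt S (G j)) A = (\<integral>\<^sup>+m. ennreal (Phi_sel S m / cj j) * indicator A m \<partial>G j)"
      unfolding Tilt_def cj_def using A sG[OF j] PhiM[OF sG[OF j]]
      by (subst emeasure_density) auto
    have "(\<integral>\<^sup>+m. ennreal (Phi_sel S m / c) * indicator A m \<partial>G j)
        = (\<integral>\<^sup>+m. ennreal (cj j / c) * (ennreal (Phi_sel S m / cj j) * indicator A m) \<partial>G j)"
    proof (intro nn_integral_cong)
      fix m
      have "Phi_sel S m / c = (cj j / c) * (Phi_sel S m / cj j)" using cj by simp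
      then have "ennreal (Phi_sel S m / c) = ennreal (cj j / c) * ennreal (Phi_sel S m / cj j)"
        using cj c Phi_pos[OF S, of m] by (simp add: ennreal_mult[symmetric])
      then show "ennreal (Phi_sel S m / c) * indicator A m = ennreal (cj j / c) * (ennreal (Phi_sel S m / cj j) * indicator A m)"
        by (simp add: mult.assoc)
    qed
    also have "\<dots> = ennreal (cj j / c) * emeasure (Tilt S (G j)) A"
      using \<open>emeasure (Tilt S (G j)) A = _\<close> A sG[OF j] PhiM[OF sG[OF j]]
      by (subst nn_integral_cmult) (auto simp: measurable_cong_sets[OF sG[OF j] refl])
    finally have "ennreal (\<pi> j) * (\<integral>\<^sup>+m. ennreal (Phi_sel S m / c) * indicator A m \<partial>G j)
      = ennreal (\<pi> j) * ennreal (cj j / c) * emeasure (Tilt S (G j)) A" by (simp add: mult.assoc)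
    also have "\<dots> = ennreal (\<pi> j * cj j / c) * emeasure (Tilt S (G j)) A"
      using pi[OF j] cj c by (simp add: ennreal_mult[symmetric] times_divide_eq_right)
    finally show "ennreal (\<pi> j) * (\<integral>\<^sup>+m. ennreal (Phi_sel S m / c) * indicator A m \<partial>G j)
      = ennreal (\<pi> j * cj j / c) * emeasure (Tilt S (G j)) A" .
  qed
  finally show ?thesis by (simp add: c_def cj_def)
qed

end


lemma pos_comb:
  fixes \<pi> d :: "nat \<Rightarrow> real"
  assumes "\<And>j. j < K \<Longrightarrow> \<pi> j \<ge> 0" "(\<Sum>j<K. \<pi> j) = 1" "\<And>j. j < K \<Longrightarrow> d j > 0"
  shows "(\<Sum>j<K. \<pi> j * d j) > 0"
proof -
  obtain j where j: "j < K" "\<pi> j > 0"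
  proof (rule ccontr)
    assume "\<not> thesis"
    then have "\<forall>j<K. \<pi> j = 0" using assms(1) that by force
    then have "(\<Sum>j<K. \<pi> j) = 0" by simp
    with assms(2) show False by simp
  qed
  show ?thesis
    using j assms(1,3) by (intro sum_pos2[of "{..<K}" j]) (auto intro: mult_nonneg_nonneg less_imp_le)
qed

theorem propositionS1:
  fixes S :: "real set" and G :: "nat \<Rightarrow> real measure" and K :: nat
  assumes "S \<in> sets lebesgue" and "S \<subseteq> {0..}" and "emeasure lebesgue S > 0"
    and "\<And>j. j < K \<Longrightarrow> prob_space (G j)"
    and "\<And>j. j < K \<Longrightarrow> sets (G j) = sets borel"
  shows "Tilt S ` ConvHull G K = ConvHull (\<lambda>j. Tilt S (G j)) K"
proof -
  have S: "S \<in> sets lebesgue" "emeasure lebesgue S > 0" using assms by auto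
  note PG = assms(4) and sG = assms(5)
  define cj where "cj j = (\<integral>m. Phi_sel S m \<partial>G j)" for j
  have cj: "cj j > 0" if "j < K" for j using cG_pos[OF S PG sG that] by (simp add: cj_def)
  show ?thesis
  proof
    show "Tilt S ` ConvHull G K \<subseteq> ConvHull (\<lambda>j. Tilt S (G j)) K"
    proof
      fix M assume "M \<in> Tilt S ` ConvHull G K"
      then obtain N where N: "N \<in> ConvHull G K" and M: "M = Tilt S N" by blast
      from N have sN: "sets N = sets borel" unfolding ConvHull_def by blast
      from N obtain \<pi> where pi: "\<forall>j<K. \<pi> j \<ge> 0" "(\<Sum>j<K. \<pi> j) = 1"
        and eq: "\<forall>A\<in>sets borel. emeasure N A = (\<Sum>j<K. ennreal (\<pi> j) * emeasure (G j) A)"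
        unfolding ConvHull_def by blast
      have cN: "(\<integral>m. Phi_sel S m \<partial>N) = (\<Sum>j<K. \<pi> j * cj j)"
        using mix_c[OF S PG sG sN, where \<pi>=\<pi>] pi eq by (simp add: cj_def)
      have cpos: "(\<Sum>j<K. \<pi> j * cj j) > 0" using pi cj by (intro pos_comb) auto
      show "M \<in> ConvHull (\<lambda>j. Tilt S (G j)) K"
        unfolding ConvHull_def
      proof (intro CollectI conjI exI[of _ "\<lambda>j. \<pi> j * cj j / (\<Sum>j<K. \<pi> j * cj j)"] allI impI ballI)
        show "sets M = sets borel" using sN by (simp add: M Tilt_def)
        show "0 \<le> \<pi> j * cj j / (\<Sum>j<K. \<pi> j * cj j)" if "j < K" for j
          using pi cj[OF that] cpos that by (auto intro!: divide_nonneg_pos mult_nonneg_nonneg simp: less_imp_le)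
        show "(\<Sum>j<K. \<pi> j * cj j / (\<Sum>j<K. \<pi> j * cj j)) = 1"
          using cpos by (simp add: sum_divide_distrib[symmetric])
        fix A :: "real set" assume A: "A \<in> sets borel"
        show "emeasure M A = (\<Sum>j<K. ennreal (\<pi> j * cj j / (\<Sum>j<K. \<pi> j * cj j)) * emeasure (Tilt S (G j)) A)"
          unfolding M using tilt_mix[OF S PG sG sN, where \<pi>=\<pi> and A=A] pi eq cN cpos A by (simp add: cj_def)
      qed
    qed
  next
    show "ConvHull (\<lambda>j. Tilt S (G j)) K \<subseteq> Tilt S ` ConvHull G K"
    proof
      fix M assume "M \<in> ConvHull (\<lambda>j. Tilt S (G j)) K"
      then have sM: "sets M = sets borel" and
        "\<exists>\<rho>. (\<forall>j<K. \<rho> j \<ge> 0) \<and> (\<Sum>j<K. \<rho> j) = 1 \<and>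
          (\<forall>A\<in>sets borel. emeasure M A = (\<Sum>j<K. ennreal (\<rho> j) * emeasure (Tilt S (G j)) A))"
        unfolding ConvHull_def by blast+
      then obtain \<rho> where rho: "\<forall>j<K. \<rho> j \<ge> 0" "(\<Sum>j<K. \<rho> j) = 1"
        and eqM: "\<forall>A\<in>sets borel. emeasure M A = (\<Sum>j<K. ennreal (\<rho> j) * emeasure (Tilt S (G j)) A)"
        by blast
      define s where "s = (\<Sum>j<K. \<rho> j * (1 / cj j))"
      have spos: "s > 0" unfolding s_def using rho cj by (intro pos_comb) auto
      define \<pi> where "\<pi> j = \<rho> j / cj j / s" for j
      have pi0: "\<pi> j \<ge> 0" if "j < K" for j
        unfolding \<pi>_def using rho cj[OF that] spos that by (auto intro!: divide_nonneg_pos simp: less_imp_le)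
      have pi1: "(\<Sum>j<K. \<pi> j) = 1"
      proof -
        have "(\<Sum>j<K. \<pi> j) = (\<Sum>j<K. \<rho> j / cj j) / s" unfolding \<pi>_def by (rule sum_divide_distrib[symmetric])
        also have "(\<Sum>j<K. \<rho> j / cj j) = s" unfolding s_def by simp
        finally show ?thesis using spos by simp
      qed
      define N where "N = mixm \<pi> G K"
      have sN: "sets N = sets borel" by (simp add: N_def sets_mixm)
      have eqN: "\<And>A. A \<in> sets borel \<Longrightarrow> emeasure N A = (\<Sum>j<K. ennreal (\<pi> j) * emeasure (G j) A)"
        unfolding N_def using sG by (intro emeasure_mixm) auto
      have NC: "N \<in> ConvHull G K"
        unfolding ConvHull_def using sN pi0 pi1 eqN by blast
      have picj: "\<pi> j * cj j = \<rho> j / s" if "j < K" for j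
        unfolding \<pi>_def using cj[OF that] by simp
      have cN: "(\<integral>m. Phi_sel S m \<partial>N) = 1 / s"
      proof -
        have "(\<integral>m. Phi_sel S m \<partial>N) = (\<Sum>j<K. \<pi> j * cj j)"
          using mix_c[OF S PG sG sN, where \<pi>=\<pi>] pi0 eqN by (simp add: cj_def)
        also have "\<dots> = (\<Sum>j<K. \<rho> j / s)" using picj by simp
        also have "\<dots> = 1 / s" using rho by (simp add: sum_divide_distrib[symmetric])
        finally show ?thesis .
      qed
      have "Tilt S N = M"
      proof (rule measure_eqI)
        show "sets (Tilt S N) = sets M" using sN sM by (simp add: Tilt_def)
        fix A assume "A \<in> sets (Tilt S N)"
        then have A: "A \<in> sets borel" using sN by (simp add: Tilt_def)
        have "emeasure (Tilt S N) A = (\<Sum>j<K. ennreal (\<pi> j * cj j / (1 / s)) * emeasure (Tilt S (G j)) A)"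
          using tilt_mix[OF S PG sG sN, where \<pi>=\<pi> and A=A] pi0 eqN cN spos A by (simp add: cj_def)
        also have "\<dots> = (\<Sum>j<K. ennreal (\<rho> j) * emeasure (Tilt S (G j)) A)"
          using picj spos by (intro sum.cong refl) simp
        also have "\<dots> = emeasure M A" using eqM A by simp
        finally show "emeasure (Tilt S N) A = emeasure M A" .
      qed
      then show "M \<in> Tilt S ` ConvHull G K" using NC by blast
    qed
  qed
qed

end
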